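(* In the setting described in the context, let $\delta\in(0,\tfrac{\sqrt2}{2})$ with $\lambda_Ka_K-\lambda_1a_1\delta>0$, let $\bar\eta>0$ satisfy $g(\mathbf Q)-g(\mathbf X)\ge\bar\eta\,d_F^2(\mathbf X,\mathbf Q)$ for all $\mathbf X\in\mathrm{St}(d,K)$, set $\delta_1=\delta^2\bar\eta$, and let $\beta_3>0$ satisfy $g(\mathbf Q)-g(\mathbf X)\le\beta_3 d_F^2(\mathbf X,\mathbf Q)$ for all $\mathbf X\in\mathrm{St}(d,K)$. Let $\mathbf X^0=[\mathbf x_1^0,\dots,\mathbf x_K^0]$, where $\mathbf x_j^0$ is a unit eigenvector of $\mathbf C$ associated with its $j$-th largest eigenvalue, $j\in[K]$ (the $K$ principal eigenvectors of $\mathbf C$). If $$\|\mathbf C-\mathbb E[\mathbf C]\|^2\le\frac{\delta_1}{8\beta_3\sum_{j=1}^K 1/\min^2\{\lambda_{j-1}-\lambda_j,\lambda_j-\lambda_{j+1}\}},$$ with the conventions $\lambda_0=+\infty$ and $\lambda_{K+1}=0$, then $g(\mathbf Q)-g(\mathbf X^0)\le\delta_1$.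
   Context: $d>K\ge1$, $\mathrm{St}(d,K)=\{\mathbf X\in\mathbb R^{d\times K}:\mathbf X^\top\mathbf X=\mathbf I_K\}$, $\mathbf Q\in\mathrm{St}(d,K)$, $\lambda_1>\dots>\lambda_K>0$, $\boldsymbol\Theta=\mathrm{diag}(\sqrt{\lambda_1},\dots,\sqrt{\lambda_K})$. Integers $L\ge1$, $n_1,\dots,n_L\ge1$, $n=\sum_ln_l$; $v_1>\dots>v_L>0$; data $\mathbf y_{l,i}=\mathbf Q\boldsymbol\Theta\mathbf z_{l,i}+\boldsymbol\eta_{l,i}\in\mathbb R^d$ ($l\in[L],i\in[n_l]$) with $\mathbf z_{l,i}$ i.i.d. $\mathcal N(\mathbf0,\mathbf I_K)$ independent of $\boldsymbol\eta_{l,i}$ i.i.d. $\mathcal N(\mathbf0,v_l\mathbf I_d)$. Sample covariance $\mathbf C=\frac1n\sum_{l=1}^L\sum_{i=1}^{n_l}\mathbf y_{l,i}\mathbf y_{l,i}^\top$, with $\mathbb E[\mathbf C]=\mathbf Q\boldsymbol\Theta^2\mathbf Q^\top+\sum_{l=1}^L\frac{n_l}{n}v_l\mathbf I_d$; $\|\cdot\|$ is the operator norm. $w_{l,k}=\lambda_k/(\lambda_k+v_l)$, $a_k=\sum_lw_{l,k}\frac{n_l}{n}\frac1{v_l}$, $g(\mathbf X)=\mathrm{tr}(\mathbf X^\top\mathbf Q\boldsymbol\Theta^2\mathbf Q^\top\mathbf X\,\mathrm{diag}(a_1,\dots,a_K))$, $d_F(\mathbf X,\mathbf Q)=\min_{\mathbf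 q\in\{\pm1\}^K}\|\mathbf X-\mathbf Q\,\mathrm{diag}(\mathbf q)\|_F$. *)

theory Defs
  imports "HOL-Analysis.Analysis"
begin

(* Conventions: indices are 1-based, j,k in {1..K}, l in {1..L}, i in {1..n_l}.
   A d x K matrix X is represented by its columns X j :: real^'d, j in {1..K};
   d = CARD('d). *)

definition outer :: "real^'d \<Rightarrow> real^'d \<Rightarrow> real^'d^'d" where
  "outer x y = (\<chi> i j. x $ i * y $ j)"

definition stiefel :: "nat \<Rightarrow> (nat \<Rightarrow> real^'d) \<Rightarrow> bool" where
  "stiefel K X \<longleftrightarrow> (\<forall>i\<in>{1..K}. \<forall>j\<in>{1..K}. X i \<bullet> X j = (if i = j then 1 else 0))"

definition ntot :: "nat \<Rightarrow> (nat \<Rightarrow> nat) \<Rightarrow> nat" where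
  "ntot L nl = (\<Sum>l=1..L. nl l)"

definition wcoef :: "(nat \<Rightarrow> real) \<Rightarrow> (nat \<Rightarrow> real) \<Rightarrow> nat \<Rightarrow> nat \<Rightarrow> real" where
  "wcoef lam v l k = lam k / (lam k + v l)"

definition acoef :: "(nat \<Rightarrow> real) \<Rightarrow> (nat \<Rightarrow> real) \<Rightarrow> nat \<Rightarrow> (nat \<Rightarrow> nat) \<Rightarrow> nat \<Rightarrow> real" where
  "acoef lam v L nl k =
     (\<Sum>l=1..L. wcoef lam v l k * (real (nl l) / real (ntot L nl)) * (1 / v l))"

(* Q Theta^2 Q^T = sum_j lambda_j q_j q_j^T *)
definition signalM :: "nat \<Rightarrow> (nat \<Rightarrow> real) \<Rightarrow> (nat \<Rightarrow> real^'d) \<Rightarrow> real^'d^'d" where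
  "signalM K lam Q = (\<Sum>j=1..K. lam j *\<^sub>R outer (Q j) (Q j))"

(* g(X) = tr(X^T Q Theta^2 Q^T X diag(a_1..a_K)) *)
definition gfun :: "nat \<Rightarrow> (nat \<Rightarrow> real) \<Rightarrow> (nat \<Rightarrow> real^'d) \<Rightarrow> (nat \<Rightarrow> real)
                     \<Rightarrow> (nat \<Rightarrow> real^'d) \<Rightarrow> real" where
  "gfun K lam Q a X = (\<Sum>k=1..K. (X k \<bullet> (signalM K lam Q *v X k)) * a k)"

definition dF :: "nat \<Rightarrow> (nat \<Rightarrow> real^'d) \<Rightarrow> (nat \<Rightarrow> real^'d) \<Rightarrow> real" where
  "dF K X Q = Min ((\<lambda>s. sqrt (\<Sum>k=1..K. (norm (X k - s k *\<^sub>R Q k))\<^sup>2))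
                   ` ({1..K} \<rightarrow>\<^sub>E {-1, 1}))"

definition ydata :: "nat \<Rightarrow> (nat \<Rightarrow> real) \<Rightarrow> (nat \<Rightarrow> real^'d) \<Rightarrow> (nat \<Rightarrow> nat \<Rightarrow> nat \<Rightarrow> real)
                      \<Rightarrow> (nat \<Rightarrow> nat \<Rightarrow> real^'d) \<Rightarrow> nat \<Rightarrow> nat \<Rightarrow> real^'d" where
  "ydata K lam Q z eta l i = (\<Sum>j=1..K. (sqrt (lam j) * z l i j) *\<^sub>R Q j) + eta l i"

definition sampleC :: "nat \<Rightarrow> (nat \<Rightarrow> real) \<Rightarrow> (nat \<Rightarrow> real^'d) \<Rightarrow> nat \<Rightarrow> (nat \<Rightarrow> nat)
                       \<Rightarrow> (nat \<Rightarrow> nat \<Rightarrow> nat \<Rightarrow> real) \<Rightarrow> (nat \<Rightarrow> nat \<Rightarrow> real^'d) \<Rightarrow> real^'d^'d" where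
  "sampleC K lam Q L nl z eta =
     (1 / real (ntot L nl)) *\<^sub>R
       (\<Sum>l=1..L. \<Sum>i=1..nl l. outer (ydata K lam Q z eta l i) (ydata K lam Q z eta l i))"

definition meanC :: "nat \<Rightarrow> (nat \<Rightarrow> real) \<Rightarrow> (nat \<Rightarrow> real^'d) \<Rightarrow> nat \<Rightarrow> (nat \<Rightarrow> nat)
                     \<Rightarrow> (nat \<Rightarrow> real) \<Rightarrow> real^'d^'d" where
  "meanC K lam Q L nl v =
     signalM K lam Q + (\<Sum>l=1..L. real (nl l) / real (ntot L nl) * v l) *\<^sub>R mat 1"

(* min{lambda_{j-1}-lambda_j, lambda_j-lambda_{j+1}} with lambda_0 = +inf, lambda_{K+1} = 0 *)
definition gapK :: "(nat \<Rightarrow> real) \<Rightarrow> nat \<Rightarrow> nat \<Rightarrow> real" where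
  "gapK lam K j =
     (let lam' = (\<lambda>i. if i = K + 1 then 0 else lam i) in
      if j = 1 then lam' 1 - lam' 2
      else min (lam (j - 1) - lam j) (lam' j - lam' (j + 1)))"

end

theory Submission
  imports Defs
begin


definition orthon :: "nat set \<Rightarrow> (nat \<Rightarrow> real^'d) \<Rightarrow> bool" where
  "orthon I w \<longleftrightarrow> (\<forall>i\<in>I. \<forall>k\<in>I. w i \<bullet> w k = (if i = k then 1 else 0))"

lemma inner_sum_orth:
  assumes "finite I" "orthon I w" "k \<in> I"
  shows "w k \<bullet> (\<Sum>i\<in>I. a i *\<^sub>R w i) = a k"
proof -
  have "w k \<bullet> (\<Sum>i\<in>I. a i *\<^sub>R w i) = (\<Sum>i\<in>I. a i * (w k \<bullet> w i))"
    by (simp add: inner_sum_right)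
  also have "\<dots> = (\<Sum>i\<in>I. if i = k then a i else 0)"
    using assms by (intro sum.cong) (auto simp: orthon_def)
  also have "\<dots> = a k" using assms by (simp add: sum.delta')
  finally show ?thesis .
qed

lemma norm2_sum_orth:
  assumes "finite I" "orthon I w"
  shows "(\<Sum>i\<in>I. a i *\<^sub>R w i) \<bullet> (\<Sum>i\<in>I. a i *\<^sub>R w i) = (\<Sum>i\<in>I. (a i)\<^sup>2)"
proof -
  have "(\<Sum>i\<in>I. a i *\<^sub>R w i) \<bullet> (\<Sum>i\<in>I. a i *\<^sub>R w i) = (\<Sum>i\<in>I. a i * (w i \<bullet> (\<Sum>i\<in>I. a i *\<^sub>R w i)))"
    by (simp add: inner_sum_left)
  also have "\<dots> = (\<Sum>i\<in>I. (a i)\<^sup>2)"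
    using assms by (intro sum.cong) (auto simp: inner_sum_orth power2_eq_square)
  finally show ?thesis .
qed

lemma span_expand:
  assumes "finite I" "orthon I w" "u \<in> span (w ` I)"
  shows "u = (\<Sum>i\<in>I. (u \<bullet> w i) *\<^sub>R w i)"
  using assms(3)
proof (induct rule: span_induct)
  case base
  show ?case unfolding subspace_def
  proof (intro conjI allI impI ballI)
    fix c x assume h: "x \<in> Collect (\<lambda>u. u = (\<Sum>i\<in>I. (u \<bullet> w i) *\<^sub>R w i))"
    have hx: "x = (\<Sum>i\<in>I. (x \<bullet> w i) *\<^sub>R w i)" using h by (rule CollectD)
    have "c *\<^sub>R x = c *\<^sub>R (\<Sum>i\<in>I. (x \<bullet> w i) *\<^sub>R w i)" using hx by (rule arg_cong)
    also have "\<dots> = (\<Sum>i\<in>I. ((c *\<^sub>R x) \<bullet> w i) *\<^sub>R w i)"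
      by (simp add: scaleR_sum_right)
    finally show "c *\<^sub>R x \<in> Collect (\<lambda>u. u = (\<Sum>i\<in>I. (u \<bullet> w i) *\<^sub>R w i))" by (rule CollectI)
  next
    fix x y assume h: "x \<in> Collect (\<lambda>u. u = (\<Sum>i\<in>I. (u \<bullet> w i) *\<^sub>R w i))"
       "y \<in> Collect (\<lambda>u. u = (\<Sum>i\<in>I. (u \<bullet> w i) *\<^sub>R w i))"
    have hx: "x = (\<Sum>i\<in>I. (x \<bullet> w i) *\<^sub>R w i)" using h(1) by (rule CollectD)
    have hy: "y = (\<Sum>i\<in>I. (y \<bullet> w i) *\<^sub>R w i)" using h(2) by (rule CollectD)
    have "x + y = (\<Sum>i\<in>I. (x \<bullet> w i) *\<^sub>R w i) + (\<Sum>i\<in>I. (y \<bullet> w i) *\<^sub>R w i)"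
      using hx hy by (rule arg_cong2)
    also have "\<dots> = (\<Sum>i\<in>I. ((x + y) \<bullet> w i) *\<^sub>R w i)"
      by (simp add: inner_add_left scaleR_add_left sum.distrib)
    finally show "x + y \<in> Collect (\<lambda>u. u = (\<Sum>i\<in>I. (u \<bullet> w i) *\<^sub>R w i))" by (rule CollectI)
  qed simp
next
  case (step x)
  then obtain k where k: "k \<in> I" "x = w k" by auto
  have "(\<Sum>i\<in>I. (w k \<bullet> w i) *\<^sub>R w i) = (\<Sum>i\<in>I. if i = k then w k else 0)"
    using assms k by (intro sum.cong) (auto simp: orthon_def)
  also have "\<dots> = w k" using assms k by (simp add: sum.delta')
  finally have "(\<Sum>i\<in>I. (w k \<bullet> w i) *\<^sub>R w i) = w k" .
  then show ?case using k(2) by (simp only:)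
qed

lemma bessel:
  assumes "finite I" "orthon I w"
  shows "(\<Sum>i\<in>I. (u \<bullet> w i)\<^sup>2) \<le> u \<bullet> u"
proof -
  define p where "p = (\<Sum>i\<in>I. (u \<bullet> w i) *\<^sub>R w i)"
  have pp: "p \<bullet> p = (\<Sum>i\<in>I. (u \<bullet> w i)\<^sup>2)" unfolding p_def by (rule norm2_sum_orth[OF assms])
  have up: "u \<bullet> p = (\<Sum>i\<in>I. (u \<bullet> w i)\<^sup>2)" unfolding p_def
    by (simp add: inner_sum_right power2_eq_square)
  have "0 \<le> (u - p) \<bullet> (u - p)" by simp
  also have "\<dots> = u \<bullet> u - 2 * (u \<bullet> p) + p \<bullet> p" by (simp add: inner_diff inner_commute)
  finally show ?thesis using pp up by simp
qed

lemma orth_inj: "orthon I w \<Longrightarrow> inj_on w I"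
  unfolding orthon_def inj_on_def by (metis one_neq_zero)

lemma dim_span_orth:
  assumes "finite I" "orthon I w"
  shows "dim (span (w ` I)) = card I"
proof -
  have "pairwise orthogonal (w ` I)"
    using assms unfolding pairwise_def orthogonal_def orthon_def by auto
  moreover have "0 \<notin> w ` I"
    using assms unfolding orthon_def by force
  ultimately have "independent (w ` I)" by (rule pairwise_orthogonal_independent)
  then have "dim (span (w ` I)) = card (w ` I)" by (rule dim_span_eq_card_independent)
  also have "\<dots> = card I" using orth_inj[OF assms(2)] by (simp add: card_image)
  finally show ?thesis .
qed

lemma inter_nonzero:
  fixes S T :: "(real^'d) set"
  assumes "subspace S" "subspace T" "dim S + dim T > CARD('d)"
  shows "\<exists>u\<in>S \<inter> T. u \<noteq> 0"
proof -
  have "dim {x + y |x y. x \<in> S \<and> y \<in> T} \<le> CARD('d)" by (rule dim_subset_UNIV_cart)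
  with dim_sums_Int[OF assms(1,2)] assms(3) have "dim (S \<inter> T) \<noteq> 0" by linarith
  then show ?thesis by auto
qed

lemma dim_orth_compl:
  fixes q :: "nat \<Rightarrow> real^'d"
  assumes "finite J" "orthon J q"
  shows "dim {y. \<forall>i\<in>J. q i \<bullet> y = 0} = CARD('d) - card J"
proof -
  have sA: "subspace (span (q ` J))" by simp
  have "dim {y \<in> UNIV. \<forall>x \<in> span (q ` J). orthogonal x y} + dim (span (q ` J)) = dim (UNIV :: (real^'d) set)"
    by (rule dim_subspace_orthogonal_to_vectors) auto
  moreover have "{y \<in> UNIV. \<forall>x \<in> span (q ` J). orthogonal x y} = {y. \<forall>i\<in>J. q i \<bullet> y = 0}"
  proof safe
    fix y i assume "\<forall>x\<in>span (q ` J). orthogonal x y" "i \<in> J"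
    then show "q i \<bullet> y = 0" by (auto simp: orthogonal_def span_base)
  next
    fix y x assume h: "\<forall>i\<in>J. q i \<bullet> y = 0" "x \<in> span (q ` J)"
    have "x = (\<Sum>i\<in>J. (x \<bullet> q i) *\<^sub>R q i)" by (rule span_expand[OF assms h(2)])
    then have "x \<bullet> y = (\<Sum>i\<in>J. (x \<bullet> q i) *\<^sub>R q i) \<bullet> y"
      by (rule arg_cong[where f="\<lambda>z. z \<bullet> y"])
    also have "\<dots> = (\<Sum>i\<in>J. (x \<bullet> q i) * (q i \<bullet> y))"
      by (simp add: inner_sum_left)
    finally have "x \<bullet> y = (\<Sum>i\<in>J. (x \<bullet> q i) * (q i \<bullet> y))" .
    then show "orthogonal x y" using h(1) by (simp add: orthogonal_def)
  qed simp
  moreover have "dim (UNIV :: (real^'d) set) = CARD('d)" by simp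
  ultimately show ?thesis using dim_span_orth[OF assms] by simp
qed



lemma orthon_subset: "orthon I w \<Longrightarrow> J \<subseteq> I \<Longrightarrow> orthon J w"
  unfolding orthon_def by blast

lemma inner_two_sums:
  assumes "finite I" "orthon I w"
  shows "(\<Sum>i\<in>I. a i *\<^sub>R w i) \<bullet> (\<Sum>i\<in>I. b i *\<^sub>R w i) = (\<Sum>i\<in>I. a i * b i)"
proof -
  have "(\<Sum>i\<in>I. a i *\<^sub>R w i) \<bullet> (\<Sum>i\<in>I. b i *\<^sub>R w i) = (\<Sum>i\<in>I. a i * (w i \<bullet> (\<Sum>i\<in>I. b i *\<^sub>R w i)))"
    by (simp add: inner_sum_left)
  also have "\<dots> = (\<Sum>i\<in>I. a i * b i)"
    using assms by (intro sum.cong) (auto simp: inner_sum_orth)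
  finally show ?thesis .
qed

lemma mv_sum: "(A :: real^'n^'m) *v (\<Sum>i\<in>I. f i) = (\<Sum>i\<in>I. A *v f i)"
  by (induct I rule: infinite_finite_induct) (auto simp: matrix_vector_right_distrib)

lemma mv_sum_left: "(\<Sum>i\<in>I. B i :: real^'n^'m) *v u = (\<Sum>i\<in>I. B i *v u)"
  by (induct I rule: infinite_finite_induct) (auto simp: matrix_vector_mult_add_rdistrib)

lemma outer_mv: "outer a b *v u = (b \<bullet> u) *\<^sub>R a"
  by (simp add: outer_def vec_eq_iff matrix_vector_mult_def inner_vec_def sum_distrib_left
      mult.commute mult.left_commute)

lemma dec_lt:
  fixes f :: "nat \<Rightarrow> real"
  assumes "\<forall>i\<in>{1..<K}. f (Suc i) < f i" "1 \<le> a" "a < b" "b \<le> K"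
  shows "f b < f a"
  using assms(3,4)
proof (induct b)
  case 0 then show ?case by simp
next
  case (Suc b)
  have "f (Suc b) < f b" using assms(1,2) Suc.prems by auto
  then show ?case using Suc by (cases "a = b") auto
qed

lemma dec_le:
  fixes f :: "nat \<Rightarrow> real"
  assumes "\<forall>i\<in>{1..<K}. f (Suc i) \<le> f i" "1 \<le> a" "a \<le> b" "b \<le> K"
  shows "f b \<le> f a"
  using assms(3,4)
proof (induct b)
  case 0 then show ?case by simp
next
  case (Suc b)
  show ?case
  proof (cases "a = Suc b")
    case False
    then have "f (Suc b) \<le> f b" "f b \<le> f a" using assms(1,2) Suc by auto
    then show ?thesis by linarith
  qed simp
qed



definition Aop :: "nat \<Rightarrow> (nat \<Rightarrow> real) \<Rightarrow> (nat \<Rightarrow> real^'d) \<Rightarrow> real \<Rightarrow> real^'d \<Rightarrow> real^'d" where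
  "Aop K lam q c0 u = (\<Sum>k\<in>{1..K}. (lam k * (q k \<bullet> u)) *\<^sub>R q k) + c0 *\<^sub>R u"

lemma quadA: "u \<bullet> Aop K lam q c0 u = (\<Sum>k\<in>{1..K}. lam k * (q k \<bullet> u)\<^sup>2) + c0 * (u \<bullet> u)"
  unfolding Aop_def
  by (simp add: inner_add_right inner_sum_right power2_eq_square inner_commute mult.assoc)

lemma eig_sum:
  fixes Cm :: "real^'n^'n"
  assumes "finite I" "\<forall>i\<in>I. Cm *v x i = mu i *\<^sub>R x i"
  shows "Cm *v (\<Sum>i\<in>I. a i *\<^sub>R x i) = (\<Sum>i\<in>I. (a i * mu i) *\<^sub>R x i)"
  unfolding mv_sum using assms by (auto simp: matrix_vector_mult_scaleR intro!: sum.cong)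

lemma weyl_lower:
  fixes x q :: "nat \<Rightarrow> real^'d" and Cm :: "real^'d^'d"
  assumes ox: "orthon {1..CARD('d)} x"
    and eig: "\<forall>i\<in>{1..CARD('d)}. Cm *v x i = mu i *\<^sub>R x i"
    and sorted: "\<forall>i\<in>{1..<CARD('d)}. mu (Suc i) \<le> mu i"
    and oq: "orthon {1..K} q" and Kd: "K < CARD('d)" and j: "1 \<le> j" "j \<le> K"
    and lamdec: "\<forall>i\<in>{1..<K}. lam (Suc i) < lam i"
    and pert: "\<forall>u. \<bar>u \<bullet> (Cm *v u) - u \<bullet> Aop K lam q c0 u\<bar> \<le> t * (u \<bullet> u)"
  shows "lam j + c0 - t \<le> mu j"
proof -
  let ?d = "CARD('d)"
  have oS: "orthon {1..j} q" using oq j by (auto intro: orthon_subset)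
  have oT: "orthon {j..?d} x" using ox j by (auto intro: orthon_subset)
  have dS: "dim (span (q ` {1..j})) = j" using dim_span_orth[OF _ oS] by simp
  have dT: "dim (span (x ` {j..?d})) = ?d + 1 - j" using dim_span_orth[OF _ oT] by simp
  obtain u where u: "u \<in> span (q ` {1..j})" "u \<in> span (x ` {j..?d})" "u \<noteq> 0"
    using inter_nonzero[of "span (q ` {1..j})" "span (x ` {j..?d})"] dS dT j Kd by auto
  define a where "a i = u \<bullet> x i" for i
  have ua: "u = (\<Sum>i\<in>{j..?d}. a i *\<^sub>R x i)" unfolding a_def by (rule span_expand[OF _ oT u(2)]) simp
  have eigT: "\<forall>i\<in>{j..?d}. Cm *v x i = mu i *\<^sub>R x i" using eig j by auto
  have "u \<bullet> (Cm *v u) = (\<Sum>i\<in>{j..?d}. a i *\<^sub>R x i) \<bullet> (Cm *v (\<Sum>i\<in>{j..?d}. a i *\<^sub>R x i))"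
    using ua by (rule arg_cong[where f="\<lambda>z. z \<bullet> (Cm *v z)"])
  also have "\<dots> = (\<Sum>i\<in>{j..?d}. a i *\<^sub>R x i) \<bullet> (\<Sum>i\<in>{j..?d}. (a i * mu i) *\<^sub>R x i)"
    by (subst eig_sum[OF _ eigT]) simp_all
  also have "\<dots> = (\<Sum>i\<in>{j..?d}. a i * (a i * mu i))" by (rule inner_two_sums[OF _ oT]) simp
  also have "\<dots> \<le> (\<Sum>i\<in>{j..?d}. a i * (a i * mu j))"
  proof (rule sum_mono)
    fix i assume i: "i \<in> {j..?d}"
    have "mu i \<le> mu j" using dec_le[of ?d mu j i] sorted j i by auto
    then have "(a i * a i) * mu i \<le> (a i * a i) * mu j" by (rule mult_left_mono) simp
    then show "a i * (a i * mu i) \<le> a i * (a i * mu j)" by (simp add: mult.assoc)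
  qed
  also have "\<dots> = mu j * (\<Sum>i\<in>{j..?d}. (a i)\<^sup>2)"
    by (simp add: sum_distrib_left power2_eq_square mult.commute mult.left_commute)
  finally have up1: "u \<bullet> (Cm *v u) \<le> mu j * (\<Sum>i\<in>{j..?d}. (a i)\<^sup>2)" .
  have "u \<bullet> u = (\<Sum>i\<in>{j..?d}. a i *\<^sub>R x i) \<bullet> (\<Sum>i\<in>{j..?d}. a i *\<^sub>R x i)"
    using ua by (rule arg_cong[where f="\<lambda>z. z \<bullet> z"])
  also have "\<dots> = (\<Sum>i\<in>{j..?d}. (a i)\<^sup>2)" by (rule norm2_sum_orth[OF _ oT]) simp
  finally have uu1: "u \<bullet> u = (\<Sum>i\<in>{j..?d}. (a i)\<^sup>2)" .
  define b where "b k = u \<bullet> q k" for k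
  have ub: "u = (\<Sum>k\<in>{1..j}. b k *\<^sub>R q k)" unfolding b_def by (rule span_expand[OF _ oS u(1)]) simp
  have qz: "q k \<bullet> u = 0" if k: "k \<in> {1..K}" "k \<notin> {1..j}" for k
  proof -
    have "q k \<bullet> u = q k \<bullet> (\<Sum>i\<in>{1..j}. b i *\<^sub>R q i)" using ub by (rule arg_cong)
    also have "\<dots> = (\<Sum>i\<in>{1..j}. b i * (q k \<bullet> q i))" by (simp add: inner_sum_right)
    also have "\<dots> = 0" using oq k j by (intro sum.neutral) (auto simp: orthon_def)
    finally show ?thesis .
  qed
  have "u \<bullet> u = (\<Sum>k\<in>{1..j}. b k *\<^sub>R q k) \<bullet> (\<Sum>k\<in>{1..j}. b k *\<^sub>R q k)"
    using ub by (rule arg_cong[where f="\<lambda>z. z \<bullet> z"])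
  also have "\<dots> = (\<Sum>k\<in>{1..j}. (b k)\<^sup>2)" by (rule norm2_sum_orth[OF _ oS]) simp
  finally have uu2: "u \<bullet> u = (\<Sum>k\<in>{1..j}. (b k)\<^sup>2)" .
  have "(\<Sum>k\<in>{1..K}. lam k * (q k \<bullet> u)\<^sup>2) = (\<Sum>k\<in>{1..j}. lam k * (q k \<bullet> u)\<^sup>2)"
    using qz j by (intro sum.mono_neutral_right) auto
  also have "\<dots> \<ge> (\<Sum>k\<in>{1..j}. lam j * (q k \<bullet> u)\<^sup>2)"
  proof (rule sum_mono)
    fix k assume k: "k \<in> {1..j}"
    have "lam j \<le> lam k"
    proof (cases "k = j")
      case False
      then show ?thesis using dec_lt[of K lam k j] lamdec k j by auto
    qed simp
    then show "lam j * (q k \<bullet> u)\<^sup>2 \<le> lam k * (q k \<bullet> u)\<^sup>2" by (simp add: mult_right_mono)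
  qed
  finally have "(\<Sum>k\<in>{1..K}. lam k * (q k \<bullet> u)\<^sup>2) \<ge> lam j * (u \<bullet> u)"
    using uu2 by (simp add: sum_distrib_left b_def inner_commute)
  then have lo: "u \<bullet> Aop K lam q c0 u \<ge> (lam j + c0) * (u \<bullet> u)"
    by (simp add: quadA distrib_right)
  have "\<bar>u \<bullet> (Cm *v u) - u \<bullet> Aop K lam q c0 u\<bar> \<le> t * (u \<bullet> u)" using pert by blast
  then have "u \<bullet> (Cm *v u) \<ge> u \<bullet> Aop K lam q c0 u - t * (u \<bullet> u)" by linarith
  with lo up1 uu1 have "(lam j + c0 - t) * (u \<bullet> u) \<le> mu j * (u \<bullet> u)"
    by (simp add: algebra_simps)
  moreover have "u \<bullet> u > 0" using u(3) by simp
  ultimately show ?thesis by simp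
qed


lemma subspace_orth: "subspace {y. \<forall>i\<in>J. q i \<bullet> y = 0}"
  unfolding subspace_def by (auto simp: inner_add_right)

lemma weyl_upper:
  fixes x q :: "nat \<Rightarrow> real^'d" and Cm :: "real^'d^'d"
  assumes ox: "orthon {1..CARD('d)} x"
    and eig: "\<forall>i\<in>{1..CARD('d)}. Cm *v x i = mu i *\<^sub>R x i"
    and sorted: "\<forall>i\<in>{1..<CARD('d)}. mu (Suc i) \<le> mu i"
    and oq: "orthon {1..K} q" and Kd: "K < CARD('d)" and j: "1 \<le> j" "j \<le> K"
    and lamdec: "\<forall>i\<in>{1..<K}. lam (Suc i) < lam i" and lamj: "lam j \<ge> 0"
    and pert: "\<forall>u. \<bar>u \<bullet> (Cm *v u) - u \<bullet> Aop K lam q c0 u\<bar> \<le> t * (u \<bullet> u)"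
  shows "mu j \<le> lam j + c0 + t"
proof -
  let ?d = "CARD('d)"
  have oS: "orthon {1..j} x" using ox j Kd by (auto intro: orthon_subset)
  have oJ: "orthon {1..<j} q" using oq j by (auto intro: orthon_subset)
  have dS: "dim (span (x ` {1..j})) = j" using dim_span_orth[OF _ oS] by simp
  have dT: "dim {y. \<forall>i\<in>{1..<j}. q i \<bullet> y = 0} = ?d - (j - 1)" using dim_orth_compl[OF _ oJ] by simp
  obtain u where u: "u \<in> span (x ` {1..j})" "u \<in> {y. \<forall>i\<in>{1..<j}. q i \<bullet> y = 0}" "u \<noteq> 0"
    using inter_nonzero[of "span (x ` {1..j})" "{y. \<forall>i\<in>{1..<j}. q i \<bullet> y = 0}"] dS dT j Kd
      subspace_orth[of "{1..<j}" q] by auto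
  define a where "a i = u \<bullet> x i" for i
  have ua: "u = (\<Sum>i\<in>{1..j}. a i *\<^sub>R x i)" unfolding a_def by (rule span_expand[OF _ oS u(1)]) simp
  have eigS: "\<forall>i\<in>{1..j}. Cm *v x i = mu i *\<^sub>R x i" using eig j Kd by auto
  have "u \<bullet> (Cm *v u) = (\<Sum>i\<in>{1..j}. a i *\<^sub>R x i) \<bullet> (Cm *v (\<Sum>i\<in>{1..j}. a i *\<^sub>R x i))"
    using ua by (rule arg_cong[where f="\<lambda>z. z \<bullet> (Cm *v z)"])
  also have "\<dots> = (\<Sum>i\<in>{1..j}. a i *\<^sub>R x i) \<bullet> (\<Sum>i\<in>{1..j}. (a i * mu i) *\<^sub>R x i)"
    by (subst eig_sum[OF _ eigS]) simp_all
  also have "\<dots> = (\<Sum>i\<in>{1..j}. a i * (a i * mu i))" by (rule inner_two_sums[OF _ oS]) simp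
  also have "\<dots> \<ge> (\<Sum>i\<in>{1..j}. a i * (a i * mu j))"
  proof (rule sum_mono)
    fix i assume i: "i \<in> {1..j}"
    have "mu j \<le> mu i" using dec_le[of ?d mu i j] sorted j i Kd by auto
    then have "(a i * a i) * mu j \<le> (a i * a i) * mu i" by (rule mult_left_mono) simp
    then show "a i * (a i * mu j) \<le> a i * (a i * mu i)" by (simp add: mult.assoc)
  qed
  also have "(\<Sum>i\<in>{1..j}. a i * (a i * mu j)) = mu j * (\<Sum>i\<in>{1..j}. (a i)\<^sup>2)"
    by (simp add: sum_distrib_left power2_eq_square mult.commute mult.left_commute)
  finally have lo1: "u \<bullet> (Cm *v u) \<ge> mu j * (\<Sum>i\<in>{1..j}. (a i)\<^sup>2)" .
  have "u \<bullet> u = (\<Sum>i\<in>{1..j}. a i *\<^sub>R x i) \<bullet> (\<Sum>i\<in>{1..j}. a i *\<^sub>R x i)"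
    using ua by (rule arg_cong[where f="\<lambda>z. z \<bullet> z"])
  also have "\<dots> = (\<Sum>i\<in>{1..j}. (a i)\<^sup>2)" by (rule norm2_sum_orth[OF _ oS]) simp
  finally have uu1: "u \<bullet> u = (\<Sum>i\<in>{1..j}. (a i)\<^sup>2)" .
  have "(\<Sum>k\<in>{1..K}. lam k * (q k \<bullet> u)\<^sup>2) \<le> (\<Sum>k\<in>{1..K}. lam j * (q k \<bullet> u)\<^sup>2)"
  proof (rule sum_mono)
    fix k assume k: "k \<in> {1..K}"
    show "lam k * (q k \<bullet> u)\<^sup>2 \<le> lam j * (q k \<bullet> u)\<^sup>2"
    proof (cases "k < j")
      case True
      then have "q k \<bullet> u = 0" using u(2) k by auto
      then show ?thesis by simp
    next
      case False
      have "lam k \<le> lam j"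
      proof (cases "k = j")
        case False
        then show ?thesis using dec_lt[of K lam j k] lamdec k j \<open>\<not> k < j\<close> by auto
      qed simp
      then show ?thesis by (simp add: mult_right_mono)
    qed
  qed
  also have "\<dots> = lam j * (\<Sum>k\<in>{1..K}. (u \<bullet> q k)\<^sup>2)" by (simp add: sum_distrib_left inner_commute)
  also have "\<dots> \<le> lam j * (u \<bullet> u)" using bessel[OF _ oq, of u] lamj by (simp add: mult_left_mono)
  finally have "(\<Sum>k\<in>{1..K}. lam k * (q k \<bullet> u)\<^sup>2) \<le> lam j * (u \<bullet> u)" .
  then have hi: "u \<bullet> Aop K lam q c0 u \<le> (lam j + c0) * (u \<bullet> u)"
    by (simp add: quadA distrib_right)
  have "\<bar>u \<bullet> (Cm *v u) - u \<bullet> Aop K lam q c0 u\<bar> \<le> t * (u \<bullet> u)" using pert by blast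
  then have "u \<bullet> (Cm *v u) \<le> u \<bullet> Aop K lam q c0 u + t * (u \<bullet> u)" by linarith
  with hi lo1 uu1 have "mu j * (u \<bullet> u) \<le> (lam j + c0 + t) * (u \<bullet> u)"
    by (simp add: algebra_simps)
  moreover have "u \<bullet> u > 0" using u(3) by simp
  ultimately show ?thesis by simp
qed



lemma residual:
  fixes xv :: "real^'d" and q :: "nat \<Rightarrow> real^'d"
  assumes oq: "orthon {1..K} q" and j: "1 \<le> j" "j \<le> K" and xx: "xv \<bullet> xv = 1"
    and res: "norm (Aop K lam q c0 xv - m *\<^sub>R xv) \<le> t"
    and wl: "\<bar>m - c0 - lam j\<bar> \<le> t"
    and g: "g > 0" and gk: "\<forall>k\<in>{1..K}. k \<noteq> j \<longrightarrow> g \<le> \<bar>lam k - lam j\<bar>" and gj: "g \<le> lam j"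
  shows "1 - (xv \<bullet> q j)\<^sup>2 \<le> 4 * t\<^sup>2 / g\<^sup>2"
proof -
  define c where "c k = q k \<bullet> xv" for k
  define e where "e = m - c0"
  have cj: "xv \<bullet> q j = c j" by (simp add: c_def inner_commute)
  have t0: "t \<ge> 0" using res norm_ge_zero order_trans by blast
  have bes: "(\<Sum>k\<in>{1..K}. (c k)\<^sup>2) \<le> 1"
    using bessel[OF _ oq, of xv] xx by (simp add: c_def inner_commute)
  have jK: "j \<in> {1..K}" using j by simp
  have split: "(\<Sum>k\<in>{1..K}. f k) = f j + (\<Sum>k\<in>{1..K}-{j}. f k)" for f :: "nat \<Rightarrow> real"
    using jK by (simp add: sum.remove)
  have cj1: "(c j)\<^sup>2 \<le> 1"
  proof -
    have "(\<Sum>k\<in>{1..K}-{j}. (c k)\<^sup>2) \<ge> 0" by (simp add: sum_nonneg)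
    then show ?thesis using bes split[of "\<lambda>k. (c k)\<^sup>2"] by linarith
  qed
  show ?thesis
  proof (cases "g \<le> 2 * t")
    case True
    then have "g\<^sup>2 \<le> (2 * t)\<^sup>2" using g by (intro power_mono) auto
    then have "1 \<le> 4 * t\<^sup>2 / g\<^sup>2" using g by (simp add: field_simps power_mult_distrib)
    then show ?thesis using cj by (simp add: zero_le_power2) (smt (verit) zero_le_power2)
  next
    case False
    define V where "V = (\<Sum>k\<in>{1..K}. (lam k * c k) *\<^sub>R q k)"
    have AV: "Aop K lam q c0 xv - m *\<^sub>R xv = V - e *\<^sub>R xv"
      by (simp add: Aop_def V_def c_def e_def algebra_simps)
    have VV: "V \<bullet> V = (\<Sum>k\<in>{1..K}. (lam k * c k)\<^sup>2)" unfolding V_def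
      by (rule norm2_sum_orth[OF _ oq]) simp
    have Vx: "V \<bullet> xv = (\<Sum>k\<in>{1..K}. lam k * c k * c k)" unfolding V_def
      by (simp add: inner_sum_left c_def)
    have "(V - e *\<^sub>R xv) \<bullet> (V - e *\<^sub>R xv) = V \<bullet> V - 2 * e * (V \<bullet> xv) + e\<^sup>2 * (xv \<bullet> xv)"
      by (simp add: inner_diff inner_commute power2_eq_square algebra_simps)
    also have "\<dots> = (\<Sum>k\<in>{1..K}. (lam k * c k)\<^sup>2) - 2 * e * (\<Sum>k\<in>{1..K}. lam k * c k * c k) + e\<^sup>2"
      using VV Vx xx by simp
    also have "\<dots> = (\<Sum>k\<in>{1..K}. (lam k - e)\<^sup>2 * (c k)\<^sup>2) + e\<^sup>2 * (1 - (\<Sum>k\<in>{1..K}. (c k)\<^sup>2))"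
    proof -
      have "(\<Sum>k\<in>{1..K}. (lam k - e)\<^sup>2 * (c k)\<^sup>2)
          = (\<Sum>k\<in>{1..K}. (lam k * c k)\<^sup>2 - 2 * e * (lam k * c k * c k) + e\<^sup>2 * (c k)\<^sup>2)"
        by (rule sum.cong) (simp_all add: power2_eq_square algebra_simps)
      also have "\<dots> = (\<Sum>k\<in>{1..K}. (lam k * c k)\<^sup>2) - 2 * e * (\<Sum>k\<in>{1..K}. lam k * c k * c k)
          + e\<^sup>2 * (\<Sum>k\<in>{1..K}. (c k)\<^sup>2)"
        by (simp add: sum.distrib sum_subtractf sum_distrib_left)
      finally show ?thesis by (simp add: algebra_simps)
    qed
    finally have NN: "(V - e *\<^sub>R xv) \<bullet> (V - e *\<^sub>R xv) = (\<Sum>k\<in>{1..K}. (lam k - e)\<^sup>2 * (c k)\<^sup>2) + e\<^sup>2 * (1 - (\<Sum>k\<in>{1..K}. (c k)\<^sup>2))" .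
    have "(V - e *\<^sub>R xv) \<bullet> (V - e *\<^sub>R xv) = (norm (V - e *\<^sub>R xv))\<^sup>2" by (simp add: power2_norm_eq_inner)
    also have "\<dots> \<le> t\<^sup>2" using res AV by (simp add: power_mono)
    finally have Nt: "(V - e *\<^sub>R xv) \<bullet> (V - e *\<^sub>R xv) \<le> t\<^sup>2" .
    have gt: "g - t > 0" using False t0 by linarith
    have ej: "\<bar>e - lam j\<bar> \<le> t" using wl by (simp add: e_def)
    have lk: "(g - t)\<^sup>2 * (c k)\<^sup>2 \<le> (lam k - e)\<^sup>2 * (c k)\<^sup>2" if k: "k \<in> {1..K}-{j}" for k
    proof -
      have "g \<le> \<bar>lam k - lam j\<bar>" using gk k by auto
      then have "g - t \<le> \<bar>lam k - e\<bar>" using ej by linarith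
      then have "(g - t)\<^sup>2 \<le> (lam k - e)\<^sup>2" using gt
        by (metis abs_of_pos power2_abs power_mono less_imp_le)
      then show ?thesis by (simp add: mult_right_mono)
    qed
    have "(g - t)\<^sup>2 \<le> e\<^sup>2"
    proof -
      have "g - t \<le> \<bar>e\<bar>" using gj ej by linarith
      then show ?thesis using gt by (metis abs_of_pos power2_abs power_mono less_imp_le)
    qed
    then have le2: "(g - t)\<^sup>2 * (1 - (\<Sum>k\<in>{1..K}. (c k)\<^sup>2)) \<le> e\<^sup>2 * (1 - (\<Sum>k\<in>{1..K}. (c k)\<^sup>2))"
      using bes by (simp add: mult_right_mono)
    have le1: "(g - t)\<^sup>2 * (\<Sum>k\<in>{1..K}-{j}. (c k)\<^sup>2) \<le> (\<Sum>k\<in>{1..K}. (lam k - e)\<^sup>2 * (c k)\<^sup>2)"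
    proof -
      have "(g - t)\<^sup>2 * (\<Sum>k\<in>{1..K}-{j}. (c k)\<^sup>2) = (\<Sum>k\<in>{1..K}-{j}. (g - t)\<^sup>2 * (c k)\<^sup>2)"
        by (simp add: sum_distrib_left)
      also have "\<dots> \<le> (\<Sum>k\<in>{1..K}-{j}. (lam k - e)\<^sup>2 * (c k)\<^sup>2)" by (rule sum_mono) (rule lk)
      also have "\<dots> \<le> (\<Sum>k\<in>{1..K}. (lam k - e)\<^sup>2 * (c k)\<^sup>2)"
        using split[of "\<lambda>k. (lam k - e)\<^sup>2 * (c k)\<^sup>2"] by (simp add: zero_le_mult_iff)
      finally show ?thesis .
    qed
    have sp: "(\<Sum>k\<in>{1..K}-{j}. (c k)\<^sup>2) = (\<Sum>k\<in>{1..K}. (c k)\<^sup>2) - (c j)\<^sup>2"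
      using split[of "\<lambda>k. (c k)\<^sup>2"] by linarith
    have main: "(g - t)\<^sup>2 * (1 - (c j)\<^sup>2) \<le> t\<^sup>2"
    proof -
      have "(g - t)\<^sup>2 * (1 - (c j)\<^sup>2) = (g - t)\<^sup>2 * (\<Sum>k\<in>{1..K}-{j}. (c k)\<^sup>2) + (g - t)\<^sup>2 * (1 - (\<Sum>k\<in>{1..K}. (c k)\<^sup>2))"
        unfolding sp by (simp add: algebra_simps)
      also have "\<dots> \<le> t\<^sup>2" using le1 le2 Nt NN by linarith
      finally show ?thesis .
    qed
    have "(g / 2)\<^sup>2 \<le> (g - t)\<^sup>2" using gt False g by (intro power_mono) auto
    then have "(g / 2)\<^sup>2 * (1 - (c j)\<^sup>2) \<le> t\<^sup>2" using main cj1
      by (meson mult_right_mono diff_ge_0_iff_ge order_trans)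
    then have "g\<^sup>2 * (1 - (c j)\<^sup>2) \<le> 4 * t\<^sup>2" by (simp add: power_divide field_simps)
    then show ?thesis using g cj by (simp add: field_simps)
  qed
qed



lemma gapK_char:
  assumes "1 \<le> j" "j \<le> K"
  shows "gapK lam K j = (if j = 1 then (if K = 1 then lam 1 else lam 1 - lam 2)
           else min (lam (j - 1) - lam j) (if j = K then lam j else lam j - lam (j + 1)))"
  using assms by (auto simp: gapK_def Let_def)

lemma gap_props:
  fixes lam :: "nat \<Rightarrow> real"
  assumes lamdec: "\<forall>i\<in>{1..<K}. lam (Suc i) < lam i" and lamK: "lam K > 0"
    and j: "1 \<le> j" "j \<le> K"
  shows "gapK lam K j > 0" "\<forall>k\<in>{1..K}. k \<noteq> j \<longrightarrow> gapK lam K j \<le> \<bar>lam k - lam j\<bar>"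
    "gapK lam K j \<le> lam j"
proof -
  have lt: "lam b < lam a" if "1 \<le> a" "a < b" "b \<le> K" for a b
    using dec_lt[OF lamdec that] .
  have pos: "lam k > 0" if "1 \<le> k" "k \<le> K" for k
    using lt[of k K] that lamK by (cases "k = K") auto
  let ?g = "gapK lam K j"
  have A: "?g \<le> lam (j - 1) - lam j" if "j \<noteq> 1" using that j by (simp add: gapK_char)
  have B: "?g \<le> lam j - lam (j + 1)" if "j \<noteq> K" using that j
    by (auto simp: gapK_char numeral_2_eq_2)
  have C: "?g \<le> lam j" if "j = K" using that j pos[of 1] by (auto simp: gapK_char)
  show "?g > 0"
    using j lt[of "j - 1" j] lt[of j "j + 1"] pos[of j] by (auto simp: gapK_char numeral_2_eq_2)
  show "?g \<le> lam j"
  proof (cases "j = K")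
    case False
    then show ?thesis using B pos[of "j + 1"] j by force
  qed (rule C)
  show "\<forall>k\<in>{1..K}. k \<noteq> j \<longrightarrow> ?g \<le> \<bar>lam k - lam j\<bar>"
  proof (intro ballI impI)
    fix k assume k: "k \<in> {1..K}" "k \<noteq> j"
    show "?g \<le> \<bar>lam k - lam j\<bar>"
    proof (cases "k < j")
      case True
      have "lam (j - 1) \<le> lam k"
      proof (cases "k = j - 1")
        case False
        then have kl: "k < j - 1" using True by linarith
        have jl: "j - 1 \<le> K" using j by linarith
        have k1: "1 \<le> k" using k by simp
        show ?thesis using lt[OF k1 kl jl] by simp
      qed simp
      moreover have "j \<noteq> 1" using True k by auto
      ultimately show ?thesis using A lt[of k j] True k by auto
    next
      case False
      then have kj: "j < k" using k by auto
      have "lam k \<le> lam (j + 1)"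
      proof (cases "k = j + 1")
        case False
        then have kl: "j + 1 < k" using kj by linarith
        have k1: "1 \<le> j + 1" by simp
        have kK: "k \<le> K" using k by simp
        show ?thesis using lt[OF k1 kl kK] by simp
      qed simp
      moreover have "j \<noteq> K" using kj k by auto
      ultimately show ?thesis using B lt[of j k] kj k j by auto
    qed
  qed
qed

theorem lemma9:
  fixes Q X0 :: "nat \<Rightarrow> real^'d"
    and K L :: nat
    and lam v :: "nat \<Rightarrow> real"
    and nl :: "nat \<Rightarrow> nat"
    and z :: "nat \<Rightarrow> nat \<Rightarrow> nat \<Rightarrow> real"
    and eta :: "nat \<Rightarrow> nat \<Rightarrow> real^'d"
    and \<delta> \<eta>bar \<beta>3 :: real
  assumes K: "1 \<le> K" "K < CARD('d)"
    and Q: "stiefel K Q"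
    and lam_dec: "\<forall>j\<in>{1..<K}. lam j > lam (Suc j)"
    and lam_pos: "lam K > 0"
    and L: "1 \<le> L"
    and nl: "\<forall>l\<in>{1..L}. 1 \<le> nl l"
    and v_dec: "\<forall>l\<in>{1..<L}. v l > v (Suc l)"
    and v_pos: "v L > 0"
    and delta: "0 < \<delta>" "\<delta> < sqrt 2 / 2"
    and delta2: "lam K * acoef lam v L nl K - lam 1 * acoef lam v L nl 1 * \<delta> > 0"
    and etabar: "\<eta>bar > 0"
      "\<forall>X. stiefel K X \<longrightarrow>
          gfun K lam Q (acoef lam v L nl) Q - gfun K lam Q (acoef lam v L nl) X
            \<ge> \<eta>bar * (dF K X Q)\<^sup>2"
    and beta3: "\<beta>3 > 0"
      "\<forall>X. stiefel K X \<longrightarrow>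
          gfun K lam Q (acoef lam v L nl) Q - gfun K lam Q (acoef lam v L nl) X
            \<le> \<beta>3 * (dF K X Q)\<^sup>2"
    and X0: "\<exists>x :: nat \<Rightarrow> real^'d. \<exists>\<mu> :: nat \<Rightarrow> real.
          (\<forall>i\<in>{1..CARD('d)}. \<forall>j\<in>{1..CARD('d)}. x i \<bullet> x j = (if i = j then 1 else 0))
        \<and> (\<forall>i\<in>{1..CARD('d)}. sampleC K lam Q L nl z eta *v x i = \<mu> i *\<^sub>R x i)
        \<and> (\<forall>i\<in>{1..<CARD('d)}. \<mu> i \<ge> \<mu> (Suc i))
        \<and> (\<forall>j\<in>{1..K}. X0 j = x j)"
    and bound: "(onorm (\<lambda>u. (sampleC K lam Q L nl z eta - meanC K lam Q L nl v) *v u))\<^sup>2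
        \<le> (\<delta>\<^sup>2 * \<eta>bar) / (8 * \<beta>3 * (\<Sum>j=1..K. 1 / (gapK lam K j)\<^sup>2))"
  shows "gfun K lam Q (acoef lam v L nl) Q - gfun K lam Q (acoef lam v L nl) X0 \<le> \<delta>\<^sup>2 * \<eta>bar"
proof -
  let ?d = "CARD('d)"
  let ?a = "acoef lam v L nl"
  obtain x :: "nat \<Rightarrow> real^'d" and mu :: "nat \<Rightarrow> real" where
    xo: "\<forall>i\<in>{1..?d}. \<forall>j\<in>{1..?d}. x i \<bullet> x j = (if i = j then 1 else 0)"
    and eig: "\<forall>i\<in>{1..?d}. sampleC K lam Q L nl z eta *v x i = mu i *\<^sub>R x i"
    and srt: "\<forall>i\<in>{1..<?d}. mu i \<ge> mu (Suc i)"
    and xX: "\<forall>j\<in>{1..K}. X0 j = x j"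
    using X0 by blast
  define Cm where "Cm = sampleC K lam Q L nl z eta"
  define M where "M = meanC K lam Q L nl v"
  define t where "t = onorm (\<lambda>u. (Cm - M) *v u)"
  define c0 where "c0 = (\<Sum>l=1..L. real (nl l) / real (ntot L nl) * v l)"
  have ox: "orthon {1..?d} x" using xo by (simp add: orthon_def)
  have oq: "orthon {1..K} Q" using Q by (simp add: orthon_def stiefel_def)
  have eig': "\<forall>i\<in>{1..?d}. Cm *v x i = mu i *\<^sub>R x i" using eig by (simp add: Cm_def)
  have srt': "\<forall>i\<in>{1..<?d}. mu (Suc i) \<le> mu i" using srt by simp
  have lamdec': "\<forall>i\<in>{1..<K}. lam (Suc i) < lam i" using lam_dec by simp
  have MA: "M *v u = Aop K lam Q c0 u" for u
    by (simp add: M_def meanC_def signalM_def Aop_def c0_def matrix_vector_mult_add_rdistrib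
        mv_sum_left outer_mv scaleR_matrix_vector_assoc[symmetric] inner_commute)
  have Enorm: "norm (Cm *v u - Aop K lam Q c0 u) \<le> t * norm u" for u
  proof -
    have "Cm *v u - Aop K lam Q c0 u = (Cm - M) *v u" by (simp add: MA matrix_vector_mult_diff_rdistrib)
    then show ?thesis unfolding t_def using onorm[OF matrix_vector_mul_bounded_linear[of "Cm - M"], of u]
      by simp
  qed
  have t0: "t \<ge> 0" unfolding t_def by (rule onorm_pos_le) (rule matrix_vector_mul_bounded_linear)
  have pert: "\<forall>u. \<bar>u \<bullet> (Cm *v u) - u \<bullet> Aop K lam Q c0 u\<bar> \<le> t * (u \<bullet> u)"
  proof
    fix u :: "real^'d"
    have "\<bar>u \<bullet> (Cm *v u) - u \<bullet> Aop K lam Q c0 u\<bar> = \<bar>u \<bullet> (Cm *v u - Aop K lam Q c0 u)\<bar>"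
      by (simp add: inner_diff_right)
    also have "\<dots> \<le> norm u * norm (Cm *v u - Aop K lam Q c0 u)" by (rule Cauchy_Schwarz_ineq2)
    also have "\<dots> \<le> norm u * (t * norm u)" using Enorm by (simp add: mult_left_mono)
    also have "\<dots> = t * (u \<bullet> u)" by (simp add: power2_norm_eq_inner[symmetric] power2_eq_square)
    finally show "\<bar>u \<bullet> (Cm *v u) - u \<bullet> Aop K lam Q c0 u\<bar> \<le> t * (u \<bullet> u)" .
  qed
  define gg where "gg j = gapK lam K j" for j
  have each: "1 - (x j \<bullet> Q j)\<^sup>2 \<le> 4 * t\<^sup>2 / (gg j)\<^sup>2" if j: "j \<in> {1..K}" for j
  proof -
    have j1: "1 \<le> j" "j \<le> K" using j by auto
    note gp = gap_props[OF lamdec' lam_pos j1]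
    have lj: "lam j \<ge> 0" using gp(1,3) by linarith
    have w1: "lam j + c0 - t \<le> mu j" by (rule weyl_lower[OF ox eig' srt' oq K(2) j1 lamdec' pert])
    have w2: "mu j \<le> lam j + c0 + t" by (rule weyl_upper[OF ox eig' srt' oq K(2) j1 lamdec' lj pert])
    have xx: "x j \<bullet> x j = 1" using xo j K by auto
    have nx: "norm (x j) = 1" using xx by (simp add: norm_eq_sqrt_inner)
    have "norm (Aop K lam Q c0 (x j) - mu j *\<^sub>R x j) = norm (Cm *v x j - Aop K lam Q c0 (x j))"
      using eig' j K by (simp add: norm_minus_commute)
    also have "\<dots> \<le> t" using Enorm[of "x j"] nx by simp
    finally have res: "norm (Aop K lam Q c0 (x j) - mu j *\<^sub>R x j) \<le> t" .
    have wl: "\<bar>mu j - c0 - lam j\<bar> \<le> t" using w1 w2 by linarith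
    show ?thesis unfolding gg_def by (rule residual[OF oq j1 xx res wl gp])
  qed
  define S where "S = (\<Sum>j=1..K. 1 / (gapK lam K j)\<^sup>2)"
  have Spos: "S > 0" unfolding S_def
  proof (rule sum_pos)
    fix j assume "j \<in> {1..K}"
    then have "gapK lam K j > 0" using gap_props(1)[OF lamdec' lam_pos] by auto
    then show "0 < 1 / (gapK lam K j)\<^sup>2" by simp
  qed (use K in auto)
  define s :: "nat \<Rightarrow> real" where "s k = (if k \<in> {1..K} then (if x k \<bullet> Q k \<ge> 0 then 1 else -1) else undefined)" for k :: nat
  have sPi: "s \<in> {1..K} \<rightarrow>\<^sub>E {-1, 1 :: real}" by (auto simp: s_def split: if_splits)
  have trm: "(norm (X0 k - s k *\<^sub>R Q k))\<^sup>2 \<le> 8 * t\<^sup>2 / (gg k)\<^sup>2" if k: "k \<in> {1..K}" for k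
  proof -
    have xx: "x k \<bullet> x k = 1" using xo k K by auto
    have qq: "Q k \<bullet> Q k = 1" using oq k by (auto simp: orthon_def)
    define cc where "cc = x k \<bullet> Q k"
    have ss: "s k * s k = 1" "s k * cc = \<bar>cc\<bar>" using k by (auto simp: s_def cc_def)
    have "(norm (X0 k - s k *\<^sub>R Q k))\<^sup>2 = (x k - s k *\<^sub>R Q k) \<bullet> (x k - s k *\<^sub>R Q k)"
      using xX k by (simp add: power2_norm_eq_inner)
    also have "\<dots> = x k \<bullet> x k - 2 * (s k * cc) + (s k * s k) * (Q k \<bullet> Q k)"
      by (simp add: inner_diff inner_commute cc_def algebra_simps)
    also have "\<dots> = 2 - 2 * \<bar>cc\<bar>" using xx qq ss by simp
    also have "\<dots> \<le> 2 * (1 - cc\<^sup>2)"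
    proof -
      have "\<bar>cc\<bar> \<le> norm (x k) * norm (Q k)" unfolding cc_def by (rule Cauchy_Schwarz_ineq2)
      also have "\<dots> = 1" using xx qq by (simp add: norm_eq_sqrt_inner)
      finally have "\<bar>cc\<bar> \<le> 1" .
      then have "cc\<^sup>2 \<le> \<bar>cc\<bar>"
        by (metis abs_ge_zero mult_left_le power2_abs power2_eq_square)
      then show ?thesis by (simp add: algebra_simps)
    qed
    also have "\<dots> \<le> 2 * (4 * t\<^sup>2 / (gg k)\<^sup>2)" using each[OF k] by (simp add: cc_def)
    finally show ?thesis by simp
  qed
  let ?F = "(\<lambda>s. sqrt (\<Sum>k=1..K. (norm (X0 k - s k *\<^sub>R Q k))\<^sup>2))"
  have fin: "finite (?F ` ({1..K} \<rightarrow>\<^sub>E {-1, 1}))" by (intro finite_imageI finite_PiE) auto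
  have dle: "dF K X0 Q \<le> ?F s" unfolding dF_def by (rule Min_le[OF fin]) (use sPi in blast)
  have dge: "dF K X0 Q \<ge> 0"
  proof -
    have "dF K X0 Q \<in> ?F ` ({1..K} \<rightarrow>\<^sub>E {-1, 1})" unfolding dF_def
      by (rule Min_in[OF fin]) (use sPi in blast)
    then show ?thesis by (auto simp: sum_nonneg)
  qed
  have "(dF K X0 Q)\<^sup>2 \<le> (?F s)\<^sup>2" using dle dge by (simp add: power_mono)
  also have "\<dots> = (\<Sum>k=1..K. (norm (X0 k - s k *\<^sub>R Q k))\<^sup>2)" by (simp add: sum_nonneg)
  also have "\<dots> \<le> (\<Sum>k=1..K. 8 * t\<^sup>2 / (gg k)\<^sup>2)" by (rule sum_mono) (rule trm)
  also have "\<dots> = 8 * t\<^sup>2 * S" by (simp add: S_def gg_def sum_distrib_left)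
  finally have dF2: "(dF K X0 Q)\<^sup>2 \<le> 8 * t\<^sup>2 * S" .
  have stX0: "stiefel K X0" using xo xX K unfolding stiefel_def by auto
  have "gfun K lam Q ?a Q - gfun K lam Q ?a X0 \<le> \<beta>3 * (dF K X0 Q)\<^sup>2" using beta3(2) stX0 by blast
  also have "\<dots> \<le> \<beta>3 * (8 * t\<^sup>2 * S)" using dF2 beta3(1) by (simp add: mult_left_mono)
  also have "\<dots> \<le> \<delta>\<^sup>2 * \<eta>bar"
  proof -
    have "t\<^sup>2 \<le> (\<delta>\<^sup>2 * \<eta>bar) / (8 * \<beta>3 * S)" using bound by (simp add: t_def Cm_def M_def S_def)
    moreover have "8 * \<beta>3 * S > 0" using beta3(1) Spos by simp
    ultimately have "t\<^sup>2 * (8 * \<beta>3 * S) \<le> \<delta>\<^sup>2 * \<eta>bar" by (simp add: pos_le_divide_eq)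
    then show ?thesis by (simp add: algebra_simps)
  qed
  finally show ?thesis .
qed


end
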